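(* Let $(E,\le,u)$ be an ordered effect space with pointed positive cone. Let $A$ be a finite set of positive subunital linear maps on $E$ that is closed under composition. If every $T\in A$ is persistent, then every $T\in A$ is unital, i.e. $T(u)=u$.
   Context: An ordered effect space is a triple $(E,\le,u)$: $E$ a real vector space, $\le$ a preorder on $E$ compatible with addition and multiplication by nonnegative scalars, and $u\in E_+=\{x: x\ge0\}$ a distinguished unit. The cone $E_+$ is pointed if $E_+\cap(-E_+)=\{0\}$. A linear map $T:E\to E$ is positive if $T(E_+)\subseteq E_+$, subunital if $T(u)\le u$, unital if $T(u)=u$. A positive map $T$ is persistent if for every $x\in E_+\setminus\{0\}$ one has $T(x)\in E_+\setminus\{0\}$ (i.e. $T$ annihilates no nonzero positive element). *)

theory Defs
  imports Complex_Main
begin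

definition ordered_effect_space :: "('a::real_vector \<Rightarrow> 'a \<Rightarrow> bool) \<Rightarrow> 'a \<Rightarrow> bool" where
  "ordered_effect_space le u \<longleftrightarrow>
     (\<forall>x. le x x) \<and>
     (\<forall>x y z. le x y \<longrightarrow> le y z \<longrightarrow> le x z) \<and>
     (\<forall>x y z. le x y \<longrightarrow> le (x + z) (y + z)) \<and>
     (\<forall>x y c. le x y \<longrightarrow> 0 \<le> c \<longrightarrow> le (c *\<^sub>R x) (c *\<^sub>R y)) \<and>
     le 0 u"

definition pos_cone :: "('a::real_vector \<Rightarrow> 'a \<Rightarrow> bool) \<Rightarrow> 'a set" where
  "pos_cone le = {x. le 0 x}"

definition pointed_cone :: "('a::real_vector \<Rightarrow> 'a \<Rightarrow> bool) \<Rightarrow> bool" where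
  "pointed_cone le \<longleftrightarrow> pos_cone le \<inter> uminus ` pos_cone le = {0}"

definition positive_map :: "('a::real_vector \<Rightarrow> 'a \<Rightarrow> bool) \<Rightarrow> ('a \<Rightarrow> 'a) \<Rightarrow> bool" where
  "positive_map le T \<longleftrightarrow> T ` pos_cone le \<subseteq> pos_cone le"

definition subunital :: "('a::real_vector \<Rightarrow> 'a \<Rightarrow> bool) \<Rightarrow> 'a \<Rightarrow> ('a \<Rightarrow> 'a) \<Rightarrow> bool" where
  "subunital le u T \<longleftrightarrow> le (T u) u"

definition unital :: "'a \<Rightarrow> ('a \<Rightarrow> 'a) \<Rightarrow> bool" where
  "unital u T \<longleftrightarrow> T u = u"

definition persistent :: "('a::real_vector \<Rightarrow> 'a \<Rightarrow> bool) \<Rightarrow> ('a \<Rightarrow> 'a) \<Rightarrow> bool" where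
  "persistent le T \<longleftrightarrow> positive_map le T \<and>
     (\<forall>x \<in> pos_cone le - {0}. T x \<in> pos_cone le - {0})"

end

theory Submission
  imports Defs
begin

theorem theorem4p13:
  fixes le :: "'a::real_vector \<Rightarrow> 'a \<Rightarrow> bool" and u :: 'a
    and A :: "('a \<Rightarrow> 'a) set"
  assumes "ordered_effect_space le u"
    and "pointed_cone le"
    and "finite A"
    and "\<forall>T \<in> A. linear T \<and> positive_map le T \<and> subunital le u T"
    and "\<forall>S \<in> A. \<forall>T \<in> A. S \<circ> T \<in> A"
    and "\<forall>T \<in> A. persistent le T"
  shows "\<forall>T \<in> A. unital u T"
proof
  fix T assume TA: "T \<in> A"
  have refl: "\<And>x. le x x" and trans: "\<And>x y z. le x y \<Longrightarrow> le y z \<Longrightarrow> le x z"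
    and addc: "\<And>x y z. le x y \<Longrightarrow> le (x + z) (y + z)"
    using assms(1) unfolding ordered_effect_space_def by blast+
  have Padd: "le 0 (x + y)" if "le 0 x" "le 0 y" for x y
  proof -
    have "le (0 + y) (x + y)" using addc[OF that(1)] .
    then show ?thesis using trans[OF that(2)] by simp
  qed
  have Pdiff: "le 0 (b - a)" if "le a b" for a b
    using addc[OF that, of "-a"] by simp
  have lin: "linear T" and posT: "positive_map le T" and sub: "le (T u) u"
    using assms(4) TA unfolding subunital_def by auto
  have powA: "T ^^ Suc n \<in> A" for n
  proof (induction n)
    case 0 then show ?case using TA by simp
  next
    case (Suc n)
    have "T \<circ> T ^^ Suc n \<in> A" using assms(5) TA Suc by blast
    then show ?case by (simp only: funpow.simps(2))
  qed
  have linpow: "linear (T ^^ n)" for n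
    by (induction n) (auto simp: linear_compose lin intro: linear_compose[of _ T, simplified comp_def] linear_id[unfolded id_def])
  have pospow: "positive_map le (T ^^ n)" for n
    by (induction n) (use posT in \<open>auto simp: positive_map_def\<close>)
  have d0: "le 0 (u - T u)" using Pdiff[OF sub] .
  have step: "le 0 ((T ^^ k) u - (T ^^ Suc k) u)" for k
  proof -
    have "(T ^^ k) u - (T ^^ Suc k) u = (T ^^ k) (u - T u)"
      using linear_diff[OF linpow[of k]] by (simp add: funpow_swap1)
    moreover have "le 0 ((T ^^ k) (u - T u))"
      using pospow[of k] d0 unfolding positive_map_def pos_cone_def by auto
    ultimately show ?thesis by simp
  qed
  have dec: "le 0 ((T ^^ j) u - (T ^^ k) u)" if "j \<le> k" for j k
    using that
  proof (induction k rule: dec_induct)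
    case base then show ?case using refl by simp
  next
    case (step k)
    have "(T ^^ j) u - (T ^^ Suc k) u = ((T ^^ j) u - (T ^^ k) u) + ((T ^^ k) u - (T ^^ Suc k) u)"
      by simp
    then show ?case using Padd[OF step.IH \<open>le 0 ((T ^^ k) u - (T ^^ Suc k) u)\<close>] by simp
  qed
  have "\<not> inj (\<lambda>n. T ^^ Suc n)"
  proof
    assume "inj (\<lambda>n. T ^^ Suc n)"
    moreover have "range (\<lambda>n. T ^^ Suc n) \<subseteq> A" using powA by auto
    ultimately have "finite (UNIV :: nat set)"
      using assms(3) finite_imageD finite_subset by metis
    then show False by simp
  qed
  then obtain i j where ij: "i \<noteq> j" "T ^^ Suc i = T ^^ Suc j" unfolding inj_def by blast
  then obtain m q where mq: "m < q" "T ^^ Suc m = T ^^ Suc q"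
    by (metis linorder_neqE_nat)
  define a where "a = (T ^^ Suc m) u - (T ^^ Suc (Suc m)) u"
  define b where "b = (T ^^ Suc (Suc m)) u - (T ^^ Suc q) u"
  have pa: "le 0 a" unfolding a_def by (rule step)
  have pb: "le 0 b" unfolding b_def by (rule dec) (use mq in simp)
  have "a + b = 0" unfolding a_def b_def using mq by simp
  then have "a = - b" by (simp add: eq_neg_iff_add_eq_0)
  then have "a \<in> pos_cone le \<inter> uminus ` pos_cone le"
    using pa pb unfolding pos_cone_def by auto
  then have a0: "a = 0" using assms(2) unfolding pointed_cone_def by blast
  have "a = (T ^^ Suc m) (u - T u)"
    unfolding a_def using linear_diff[OF linpow[of "Suc m"]]
    by (simp only: funpow_Suc_right[of m T] comp_def) (metis funpow_Suc_right comp_def)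
  then have "(T ^^ Suc m) (u - T u) = 0" using a0 by simp
  moreover have "persistent le (T ^^ Suc m)" using assms(6) powA by blast
  ultimately have "u - T u = 0"
    using d0 unfolding persistent_def pos_cone_def by blast
  then show "unital u T" unfolding unital_def by simp
qed

end
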